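(* In the general setting described in the context, fix $n$ and let $\{y_k:k=1,\dots,L\}\subseteq M$ with weights $\tau_k>0$ satisfy, for some $A,B>0$, $A\|p\|_2^2\le\sum_{k=1}^L|p(y_k)|^2\tau_k\le B\|p\|_2^2$ for all $p\in\mathcal P_n$. For $f\in C(M)$ let $q=\operatorname{argmin}_{p\in\mathcal P_n}\sum_{k=1}^L|f(y_k)-p(y_k)|^2\tau_k$. Then $$\|f-q\|_2\le\big(1+(B/A)^2\big)^{1/2}\|f-P_nf\|_\infty.$$
   Context: $M$ is a compact space, $\mu$ a probability measure on $M$, $\|\cdot\|_2$ the $L^2(M,\mu)$-norm. $\{\phi_k:k\in\mathbb N\}$ is an orthonormal basis of $L^2(M,\mu)$ of continuous functions with $\phi_1\equiv1$. $(\lambda_k)$ is non-decreasing, $\lambda_k\ge0$, $\lambda_k\to\infty$. $\mathcal P_n=\operatorname{span}\{\phi_k:\lambda_k\le n\}$ and $P_n$ is the orthogonal projection of $L^2(M,\mu)$ onto $\mathcal P_n$. *)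

theory Defs
  imports "HOL-Probability.Probability"
begin

definition l2inner :: "'a measure \<Rightarrow> ('a \<Rightarrow> real) \<Rightarrow> ('a \<Rightarrow> real) \<Rightarrow> real" where
  "l2inner \<mu> f g = (\<integral>x. f x * g x \<partial>\<mu>)"

definition L2norm :: "'a measure \<Rightarrow> ('a \<Rightarrow> real) \<Rightarrow> real" where
  "L2norm \<mu> f = sqrt (\<integral>x. (f x)\<^sup>2 \<partial>\<mu>)"

definition square_integrable :: "'a measure \<Rightarrow> ('a \<Rightarrow> real) \<Rightarrow> bool" where
  "square_integrable \<mu> f \<longleftrightarrow> f \<in> borel_measurable \<mu> \<and> integrable \<mu> (\<lambda>x. (f x)\<^sup>2)"

definition orthonormal_basis_L2 :: "'a measure \<Rightarrow> (nat \<Rightarrow> 'a \<Rightarrow> real) \<Rightarrow> bool" where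
  "orthonormal_basis_L2 \<mu> \<phi> \<longleftrightarrow>
     (\<forall>k. square_integrable \<mu> (\<phi> k)) \<and>
     (\<forall>j k. l2inner \<mu> (\<phi> j) (\<phi> k) = (if j = k then 1 else 0)) \<and>
     (\<forall>f. square_integrable \<mu> f \<longrightarrow>
        (\<lambda>N. L2norm \<mu> (\<lambda>x. f x - (\<Sum>k<N. l2inner \<mu> f (\<phi> k) * \<phi> k x))) \<longlonglongrightarrow> 0)"

definition low_idx :: "(nat \<Rightarrow> real) \<Rightarrow> nat \<Rightarrow> nat set" where
  "low_idx lam n = {k. lam k \<le> real n}"

definition Pspace :: "(nat \<Rightarrow> 'a \<Rightarrow> real) \<Rightarrow> (nat \<Rightarrow> real) \<Rightarrow> nat \<Rightarrow> ('a \<Rightarrow> real) set" where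
  "Pspace \<phi> lam n = {p. \<exists>c. p = (\<lambda>x. \<Sum>k\<in>low_idx lam n. c k * \<phi> k x)}"

definition Pproj :: "'a measure \<Rightarrow> (nat \<Rightarrow> 'a \<Rightarrow> real) \<Rightarrow> (nat \<Rightarrow> real) \<Rightarrow> nat
    \<Rightarrow> ('a \<Rightarrow> real) \<Rightarrow> ('a \<Rightarrow> real)" where
  "Pproj \<mu> \<phi> lam n f = (\<lambda>x. \<Sum>k\<in>low_idx lam n. l2inner \<mu> f (\<phi> k) * \<phi> k x)"

definition supnorm :: "'a set \<Rightarrow> ('a \<Rightarrow> real) \<Rightarrow> real" where
  "supnorm M g = (SUP x\<in>M. \<bar>g x\<bar>)"

end

theory Submission
  imports Defs
begin


lemma cont_bounded:
  fixes u :: "'a::topological_space \<Rightarrow> real"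
  assumes "compact M" "continuous_on M u"
  shows "\<exists>C. \<forall>x\<in>M. \<bar>u x\<bar> \<le> C"
proof -
  have "bounded (u ` M)" using assms compact_continuous_image compact_imp_bounded by blast
  then show ?thesis by (auto simp: bounded_iff)
qed

lemma cont_meas:
  fixes u :: "'a::topological_space \<Rightarrow> real"
  assumes "sets \<mu> = sets (restrict_space borel M)" "continuous_on M u"
  shows "u \<in> borel_measurable \<mu>"
  using borel_measurable_continuous_on_restrict[OF assms(2)] measurable_cong_sets[OF assms(1) refl]
  by blast

lemma cont_integrable:
  fixes u :: "'a::topological_space \<Rightarrow> real"
  assumes "compact M" "prob_space \<mu>" "space \<mu> = M" "sets \<mu> = sets (restrict_space borel M)"
    "continuous_on M u"
  shows "integrable \<mu> u"
proof -
  obtain C where C: "\<forall>x\<in>M. \<bar>u x\<bar> \<le> C" using cont_bounded assms by blast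
  interpret prob_space \<mu> by fact
  show ?thesis
    by (rule integrable_const_bound[where B=C]) (use C assms cont_meas in auto)
qed

lemma sq_expand:
  fixes u v w :: "nat \<Rightarrow> real"
  shows "(\<Sum>k\<in>S. (u k - t * v k)\<^sup>2 * w k) = (\<Sum>k\<in>S. (u k)\<^sup>2 * w k)
     - 2 * t * (\<Sum>k\<in>S. u k * v k * w k) + t\<^sup>2 * (\<Sum>k\<in>S. (v k)\<^sup>2 * w k)"
  by (simp add: power2_diff sum_subtractf sum.distrib sum_distrib_left algebra_simps power_mult_distrib)

theorem corollary3p4:
  fixes M :: "'a::topological_space set"
    and \<mu> :: "'a measure"
    and \<phi> :: "nat \<Rightarrow> 'a \<Rightarrow> real"
    and lam :: "nat \<Rightarrow> real"
    and n L :: nat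
    and y :: "nat \<Rightarrow> 'a"
    and \<tau> :: "nat \<Rightarrow> real"
    and A B :: real
    and f q :: "'a \<Rightarrow> real"
  assumes M_compact: "compact M"
    and prob: "prob_space \<mu>"
    and space_mu: "space \<mu> = M"
    and sets_mu: "sets \<mu> = sets (restrict_space borel M)"
    and onb: "orthonormal_basis_L2 \<mu> \<phi>"
    and phi_cont: "\<And>k. continuous_on M (\<phi> k)"
    and phi0: "\<And>x. x \<in> M \<Longrightarrow> \<phi> 0 x = 1"
    and lam_mono: "mono lam"
    and lam_nonneg: "\<And>k. lam k \<ge> 0"
    and lam_inf: "filterlim lam at_top sequentially"
    and y_in: "\<And>k. k \<in> {1..L} \<Longrightarrow> y k \<in> M"
    and tau_pos: "\<And>k. k \<in> {1..L} \<Longrightarrow> \<tau> k > 0"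
    and A_pos: "A > 0" and B_pos: "B > 0"
    and MZ: "\<And>p. p \<in> Pspace \<phi> lam n \<Longrightarrow>
               A * (L2norm \<mu> p)\<^sup>2 \<le> (\<Sum>k=1..L. \<bar>p (y k)\<bar>\<^sup>2 * \<tau> k) \<and>
               (\<Sum>k=1..L. \<bar>p (y k)\<bar>\<^sup>2 * \<tau> k) \<le> B * (L2norm \<mu> p)\<^sup>2"
    and f_cont: "continuous_on M f"
    and q_in: "q \<in> Pspace \<phi> lam n"
    and q_min: "\<And>p. p \<in> Pspace \<phi> lam n \<Longrightarrow>
               (\<Sum>k=1..L. \<bar>f (y k) - q (y k)\<bar>\<^sup>2 * \<tau> k) \<le> (\<Sum>k=1..L. \<bar>f (y k) - p (y k)\<bar>\<^sup>2 * \<tau> k)"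
  shows "L2norm \<mu> (\<lambda>x. f x - q x)
           \<le> sqrt (1 + (B / A)\<^sup>2) * supnorm M (\<lambda>x. f x - Pproj \<mu> \<phi> lam n f x)"
proof -
  interpret P: prob_space \<mu> by (rule prob)
  define I where "I = low_idx lam n"
  define a where "a k = l2inner \<mu> f (\<phi> k)" for k
  define g where "g = (\<lambda>x. f x - Pproj \<mu> \<phi> lam n f x)"
  define S where "S = supnorm M g"
  define D where "D u = (\<Sum>k=1..L. (u (y k))\<^sup>2 * \<tau> k)" for u :: "'a \<Rightarrow> real"
  have finI: "finite I"
  proof -
    have "eventually (\<lambda>k. real n + 1 \<le> lam k) sequentially"
      using lam_inf by (simp add: filterlim_at_top)
    then obtain N where N: "\<And>k. k \<ge> N \<Longrightarrow> real n + 1 \<le> lam k"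
      by (auto simp: eventually_sequentially)
    have "I \<subseteq> {..<N}"
    proof
      fix k assume "k \<in> I"
      then have "lam k \<le> real n" by (simp add: I_def low_idx_def)
      then show "k \<in> {..<N}" using N[of k] by (cases "k \<ge> N") auto
    qed
    then show ?thesis using finite_subset by blast
  qed
  have Pspace_eq: "Pspace \<phi> lam n = {p. \<exists>c. p = (\<lambda>x. \<Sum>k\<in>I. c k * \<phi> k x)}"
    by (simp add: Pspace_def I_def)
  have contS: "continuous_on M (\<lambda>x. \<Sum>k\<in>I. c k * \<phi> k x)" for c
    by (intro continuous_intros phi_cont)
  have intc: "integrable \<mu> u" if "continuous_on M u" for u :: "'a \<Rightarrow> real"
    using cont_integrable[OF M_compact prob space_mu sets_mu that] .
  obtain cq where cq: "q = (\<lambda>x. \<Sum>k\<in>I. cq k * \<phi> k x)" using q_in Pspace_eq by auto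
  define r where "r = (\<lambda>x. \<Sum>k\<in>I. (a k - cq k) * \<phi> k x)"
  have Pf: "Pproj \<mu> \<phi> lam n f = (\<lambda>x. \<Sum>k\<in>I. a k * \<phi> k x)"
    by (simp add: Pproj_def I_def a_def)
  have fq: "f x - q x = g x + r x" for x
    by (simp add: g_def Pf r_def cq left_diff_distrib sum_subtractf)
  have r_in: "r \<in> Pspace \<phi> lam n" unfolding Pspace_eq r_def by (rule CollectI, rule exI[of _ "\<lambda>k. a k - cq k"]) simp
  have contg: "continuous_on M g" unfolding g_def Pf by (intro continuous_intros f_cont contS)
  have contr: "continuous_on M r" unfolding r_def by (rule contS)
  obtain C where C: "\<forall>x\<in>M. \<bar>g x\<bar> \<le> C" using cont_bounded[OF M_compact contg] by blast
  have bdd: "bdd_above ((\<lambda>x. \<bar>g x\<bar>) ` M)" using C by (auto intro: bdd_aboveI2)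
  have gS: "\<bar>g x\<bar> \<le> S" if "x \<in> M" for x
    unfolding S_def supnorm_def using cSUP_upper[OF that bdd] .
  have Mne: "M \<noteq> {}" using P.not_empty space_mu by simp
  then obtain x0 where "x0 \<in> M" by blast
  have S0: "S \<ge> 0" using gS[OF \<open>x0 \<in> M\<close>] by linarith
  have g2S: "(g x)\<^sup>2 \<le> S\<^sup>2" if "x \<in> M" for x
    using gS[OF that] by (metis abs_ge_zero power2_abs power_mono)
  have orth_k: "(\<integral>x. g x * \<phi> k x \<partial>\<mu>) = 0" if "k \<in> I" for k
  proof -
    have eq: "(\<lambda>x. g x * \<phi> k x) = (\<lambda>x. f x * \<phi> k x - (\<Sum>j\<in>I. a j * (\<phi> j x * \<phi> k x)))"
      by (simp add: g_def Pf left_diff_distrib sum_distrib_right mult.assoc)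
    have ij: "integrable \<mu> (\<lambda>x. \<phi> j x * \<phi> k x)" for j
      by (intro intc continuous_intros phi_cont)
    have "(\<integral>x. g x * \<phi> k x \<partial>\<mu>) = (\<integral>x. f x * \<phi> k x \<partial>\<mu>) - (\<Sum>j\<in>I. a j * (\<integral>x. \<phi> j x * \<phi> k x \<partial>\<mu>))"
      unfolding eq
      by (subst Bochner_Integration.integral_diff)
         (auto intro!: intc continuous_intros phi_cont f_cont simp: ij)
    also have "\<dots> = a k - (\<Sum>j\<in>I. a j * (if j = k then 1 else 0))"
      using onb by (simp add: orthonormal_basis_L2_def l2inner_def a_def)
    also have "\<dots> = 0" using finI that by (simp add: if_distrib cong: if_cong)
    finally show ?thesis .
  qed
  have orth: "(\<integral>x. g x * r x \<partial>\<mu>) = 0"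
  proof -
    have "(\<integral>x. g x * r x \<partial>\<mu>) = (\<integral>x. (\<Sum>k\<in>I. (a k - cq k) * (g x * \<phi> k x)) \<partial>\<mu>)"
      by (simp add: r_def sum_distrib_left mult.assoc mult.left_commute)
    also have "\<dots> = (\<Sum>k\<in>I. (a k - cq k) * (\<integral>x. g x * \<phi> k x \<partial>\<mu>))"
      by (subst Bochner_Integration.integral_sum)
         (auto intro!: intc continuous_intros phi_cont contg)
    also have "\<dots> = 0" using orth_k by simp
    finally show ?thesis .
  qed
  have Dnn: "D u \<ge> 0" for u
    unfolding D_def using tau_pos by (intro sum_nonneg) (simp add: less_imp_le)
  define c where "c = (\<Sum>k=1..L. (f (y k) - q (y k)) * r (y k) * \<tau> k)"
  define U where "U = (\<Sum>k=1..L. (f (y k) - q (y k))\<^sup>2 * \<tau> k)"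
  have expand: "(\<Sum>k=1..L. ((f (y k) - q (y k)) - t * r (y k))\<^sup>2 * \<tau> k) = U - 2 * t * c + t\<^sup>2 * D r" for t
    unfolding U_def c_def D_def by (rule sq_expand)
  have Dr_le: "D r \<le> D g"
  proof (cases "D r = 0")
    case True then show ?thesis using Dnn[of g] by simp
  next
    case False
    then have Dpos: "D r > 0" using Dnn[of r] by simp
    define t where "t = c / D r"
    define p where "p = (\<lambda>x. q x + t * r x)"
    have "p = (\<lambda>x. \<Sum>k\<in>I. (cq k + t * (a k - cq k)) * \<phi> k x)"
      by (rule ext) (simp add: p_def cq r_def sum.distrib[symmetric] sum_distrib_left algebra_simps)
    then have p_in: "p \<in> Pspace \<phi> lam n" unfolding Pspace_eq
      by (intro CollectI exI[of _ "\<lambda>k. cq k + t * (a k - cq k)"])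
    have "U \<le> (\<Sum>k=1..L. ((f (y k) - q (y k)) - t * r (y k))\<^sup>2 * \<tau> k)"
      using q_min[OF p_in] by (simp add: U_def p_def algebra_simps)
    also have "\<dots> = U - 2 * t * c + t\<^sup>2 * D r" by (rule expand)
    also have "\<dots> = U - c\<^sup>2 / D r" using Dpos by (simp add: t_def field_simps power2_eq_square)
    finally have "c\<^sup>2 / D r \<le> 0" by simp
    then have "c\<^sup>2 \<le> 0" using Dpos by (simp add: divide_le_0_iff)
    then have c0: "c = 0" by simp
    have "D g = (\<Sum>k=1..L. ((f (y k) - q (y k)) - 1 * r (y k))\<^sup>2 * \<tau> k)"
      unfolding D_def by (simp add: fq)
    also have "\<dots> = U + D r" using expand[of 1] c0 by simp
    finally show ?thesis using U_def Dnn[of "\<lambda>x. f x - q x"] unfolding D_def by simp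
  qed
  have L2sq: "(L2norm \<mu> u)\<^sup>2 = (\<integral>x. (u x)\<^sup>2 \<partial>\<mu>)" for u
    unfolding L2norm_def by (simp add: integral_nonneg_AE)
  have Dabs: "(\<Sum>k=1..L. \<bar>p (y k)\<bar>\<^sup>2 * \<tau> k) = D p" for p by (simp add: D_def)
  have rbound: "(\<integral>x. (r x)\<^sup>2 \<partial>\<mu>) \<le> (B / A)\<^sup>2 * S\<^sup>2"
  proof (cases "0 \<in> I")
    case False
    have "I = {}"
    proof (rule ccontr)
      assume "I \<noteq> {}"
      then obtain k where "k \<in> I" by blast
      then have "lam k \<le> real n" by (simp add: I_def low_idx_def)
      moreover have "lam 0 \<le> lam k" using lam_mono by (simp add: monoD)
      ultimately have "0 \<in> I" by (simp add: I_def low_idx_def)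
      with False show False by simp
    qed
    then have "r = (\<lambda>x. 0)" by (simp add: r_def)
    then show ?thesis by simp
  next
    case True
    define p0 where "p0 = (\<lambda>x. \<Sum>k\<in>I. (if k = 0 then 1 else 0) * \<phi> k x)"
    have p0_eq: "p0 = \<phi> 0" using finI True
    proof (intro ext)
      fix x
      have "(\<Sum>k\<in>I. (if k = 0 then 1 else 0) * \<phi> k x) = (\<Sum>k\<in>I. if k = 0 then \<phi> k x else 0)"
        by (rule sum.cong) auto
      then show "p0 x = \<phi> 0 x" using finI True by (simp add: p0_def)
    qed
    have p0_in: "p0 \<in> Pspace \<phi> lam n" unfolding Pspace_eq p0_def
      by (intro CollectI exI[of _ "\<lambda>k. if k = 0 then 1 else 0"]) simp
    have "(L2norm \<mu> p0)\<^sup>2 = 1"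
      using onb unfolding L2sq p0_eq by (simp add: orthonormal_basis_L2_def l2inner_def power2_eq_square)
    moreover have "D p0 = (\<Sum>k=1..L. \<tau> k)"
      unfolding D_def p0_eq using y_in phi0 by (intro sum.cong) auto
    ultimately have AB: "A \<le> (\<Sum>k=1..L. \<tau> k)" "(\<Sum>k=1..L. \<tau> k) \<le> B"
      using MZ[OF p0_in] Dabs by auto
    have "D g \<le> (\<Sum>k=1..L. S\<^sup>2 * \<tau> k)"
      unfolding D_def using g2S y_in tau_pos
      by (intro sum_mono mult_right_mono) (auto simp: less_imp_le)
    also have "\<dots> \<le> S\<^sup>2 * B" using AB by (simp add: sum_distrib_left[symmetric] mult_left_mono)
    finally have DgB: "D g \<le> S\<^sup>2 * B" .
    have "A * (L2norm \<mu> r)\<^sup>2 \<le> D r" using MZ[OF r_in] Dabs[of r] by simp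
    then have "A * (\<integral>x. (r x)\<^sup>2 \<partial>\<mu>) \<le> S\<^sup>2 * B"
      unfolding L2sq using Dr_le DgB by linarith
    then have "(\<integral>x. (r x)\<^sup>2 \<partial>\<mu>) \<le> (B / A) * S\<^sup>2"
      using A_pos by (simp add: field_simps)
    also have "\<dots> \<le> (B / A)\<^sup>2 * S\<^sup>2"
    proof -
      have "1 \<le> B / A" using AB A_pos by simp
      then have "B / A * 1 \<le> B / A * (B / A)" by (intro mult_left_mono) auto
      then have "B / A \<le> (B / A)\<^sup>2" by (simp only: power2_eq_square mult_1_right)
      then show ?thesis by (intro mult_right_mono) auto
    qed
    finally show ?thesis .
  qed
  have gbound: "(\<integral>x. (g x)\<^sup>2 \<partial>\<mu>) \<le> S\<^sup>2"
  proof -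
    have "(\<integral>x. (g x)\<^sup>2 \<partial>\<mu>) \<le> (\<integral>x. S\<^sup>2 \<partial>\<mu>)"
    proof (rule integral_mono)
      show "integrable \<mu> (\<lambda>x. (g x)\<^sup>2)" by (intro intc continuous_intros contg)
      show "integrable \<mu> (\<lambda>x. S\<^sup>2)" by simp
      show "(g x)\<^sup>2 \<le> S\<^sup>2" if "x \<in> space \<mu>" for x using g2S that space_mu by simp
    qed
    then show ?thesis using P.prob_space by simp
  qed
  have total: "(\<integral>x. (f x - q x)\<^sup>2 \<partial>\<mu>) = (\<integral>x. (g x)\<^sup>2 \<partial>\<mu>) + 2 * (\<integral>x. g x * r x \<partial>\<mu>) + (\<integral>x. (r x)\<^sup>2 \<partial>\<mu>)"
  proof -
    have "(\<integral>x. (f x - q x)\<^sup>2 \<partial>\<mu>) = (\<integral>x. (g x)\<^sup>2 + 2 * (g x * r x) + (r x)\<^sup>2 \<partial>\<mu>)"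
      by (rule Bochner_Integration.integral_cong) (simp_all add: fq power2_sum algebra_simps)
    also have "\<dots> = (\<integral>x. (g x)\<^sup>2 \<partial>\<mu>) + 2 * (\<integral>x. g x * r x \<partial>\<mu>) + (\<integral>x. (r x)\<^sup>2 \<partial>\<mu>)"
      by (subst Bochner_Integration.integral_add, (auto intro!: intc continuous_intros contg contr)[2])
         (subst Bochner_Integration.integral_add, (auto intro!: intc continuous_intros contg contr))
    finally show ?thesis .
  qed
  have "(\<integral>x. (f x - q x)\<^sup>2 \<partial>\<mu>) \<le> (1 + (B / A)\<^sup>2) * S\<^sup>2"
    using total orth gbound rbound by (simp add: algebra_simps)
  then have "L2norm \<mu> (\<lambda>x. f x - q x) \<le> sqrt ((1 + (B / A)\<^sup>2) * S\<^sup>2)"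
    unfolding L2norm_def by (rule real_sqrt_le_mono)
  also have "\<dots> = sqrt (1 + (B / A)\<^sup>2) * S" using S0 by (simp add: real_sqrt_mult)
  finally show ?thesis by (simp add: S_def g_def)
qed

end
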